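(* Let $k>2$ be even, let $\pi=(1\,2\,\cdots\,k)\in\mathbb{S}_k$, $\mathcal{O}_\pi$ its conjugacy class (the $k$-cycles), so that $\mathbb{S}_k^\pi=\langle\pi\rangle\cong\mathbb{Z}_k$. For a $k$-th root of unity $\omega$ let $\chi_\omega$ be the character of $\langle\pi\rangle$ with $\chi_\omega(\pi)=\omega$. Then $\dim\mathfrak{B}(\mathcal{O}_\pi,\chi_\omega)=\infty$ if $\omega\ne-1$, and the braiding of $M(\mathcal{O}_\pi,\chi_\omega)$ is negative if $\omega=-1$.
   Context: Permutations are composed right to left. For a finite group $G$, a conjugacy class $\mathcal{C}$ of $G$, a fixed $s\in\mathcal{C}$ with centralizer $G^s$ and an irreducible representation $(\rho,V)$ of $G^s$, $M(\mathcal{C},\rho)$ is the irreducible Yetter–Drinfeld module over $\mathbb{C}G$: enumerate $\mathcal{C}=\{t_1=s,\dots,t_M\}$, choose $g_i\in G$ with $g_isg_i^{-1}=t_i$; then $M(\mathcal{C},\rho)=\bigoplus_i g_i\otimes V$ with grading $\deg(g_i\otimes v)=t_i$, action $g\cdot(g_i\otimes v)=g_j\otimes\rho(\gamma)v$ where $gg_i=g_j\gamma$, $\gamma\in G^s$, and braiding $c((g_i\otimes v)\otimes(g_j\otimes w))=(g_h\otimes\rho(\gamma)w)\otimes(g_i\otimes v)$ where $t_ig_j=g_h\gamma$, $\gamma\in G^s$. $\mathfrak{B}(\mathcal{C},\rho)$ is the Nichols algebra of this braided vector space. When $\rho$ is one-dimensional, the braiding is called negative if for all $i,j$ with $t_it_j=t_jt_i$,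 setting $q_{ij}:=\rho(g_j^{-1}t_ig_j)$, one has $q_{ii}=-1$ and $q_{ij}q_{ji}=1$. *)

theory Defs
  imports Main "HOL-Library.Extended_Nat" "HOL-Combinatorics.Permutations" "HOL-Library.Function_Algebras"
begin

type_synonym perm = "nat \<Rightarrow> nat"

definition Sk :: "nat \<Rightarrow> perm set" where
  "Sk k = {p. p permutes {1..k}}"

text \<open>pi = (1 2 ... k); permutations are functions, composed right to left by (o).\<close>
definition kcycle :: "nat \<Rightarrow> perm" where
  "kcycle k = (\<lambda>i. if 1 \<le> i \<and> i < k then i + 1 else if i = k then 1 else i)"

definition conj_class :: "perm set \<Rightarrow> perm \<Rightarrow> perm set" where
  "conj_class G s = {g \<circ> s \<circ> inv g | g. g \<in> G}"

definition chi :: "nat \<Rightarrow> complex \<Rightarrow> perm \<Rightarrow> complex" where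
  "chi k \<omega> \<gamma> = \<omega> ^ (LEAST j. (kcycle k ^^ j) = \<gamma>)"

text \<open>Basis vector indexed by t in C is g_t (x) 1.  Given the choice g of the g_i and rho,
  c(x_t (x) x_u) = rho(gamma) x_{t u t^-1} (x) x_t where t g_u = g_{t u t^-1} gamma.\<close>
definition yd_coeff :: "(perm \<Rightarrow> perm) \<Rightarrow> (perm \<Rightarrow> complex) \<Rightarrow> perm \<Rightarrow> perm \<Rightarrow> complex" where
  "yd_coeff g \<rho> t u = \<rho> (inv (g (t \<circ> u \<circ> inv t)) \<circ> t \<circ> g u)"

definition rack_conj :: "perm \<Rightarrow> perm \<Rightarrow> perm" where
  "rack_conj t u = t \<circ> u \<circ> inv t"

text \<open>V^{(x)n} has basis the words of length n over the index set X; vectors are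
  coefficient functions on words.  Linear maps are given by their values on basis words.\<close>

definition words :: "'a set \<Rightarrow> nat \<Rightarrow> 'a list set" where
  "words X n = {w. length w = n \<and> set w \<subseteq> X}"

definition single :: "'a list \<Rightarrow> 'a list \<Rightarrow> complex" where
  "single w = (\<lambda>w'. if w' = w then 1 else 0)"

definition lin :: "'a set \<Rightarrow> nat \<Rightarrow> ('a list \<Rightarrow> 'a list \<Rightarrow> complex)
     \<Rightarrow> ('a list \<Rightarrow> complex) \<Rightarrow> 'a list \<Rightarrow> complex" where
  "lin X n F v = (\<lambda>w'. \<Sum>w\<in>words X n. v w * F w w')"

text \<open>braiding c acting on tensor positions i, i+1 (0-indexed), on a basis word w.\<close>
definition bgen :: "('a \<Rightarrow> 'a \<Rightarrow> 'a) \<Rightarrow> ('a \<Rightarrow> 'a \<Rightarrow> complex) \<Rightarrow> nat \<Rightarrow> 'a list \<Rightarrow> 'a list \<Rightarrow> complex" where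
  "bgen r q i w = (if Suc i < length w then
      (\<lambda>w'. if w' = w[i := r (w!i) (w!Suc i), Suc i := w!i] then q (w!i) (w!Suc i) else 0)
    else single w)"

text \<open>chain n j = c_{n-1} c_{n-2} ... c_{n-j} on V^{(x)n} (1-indexed c_m acts on positions m, m+1).\<close>
fun chain :: "'a set \<Rightarrow> ('a \<Rightarrow> 'a \<Rightarrow> 'a) \<Rightarrow> ('a \<Rightarrow> 'a \<Rightarrow> complex) \<Rightarrow> nat \<Rightarrow> nat
     \<Rightarrow> 'a list \<Rightarrow> 'a list \<Rightarrow> complex" where
  "chain X r q n 0 w = single w"
| "chain X r q n (Suc j) w = lin X n (chain X r q n j) (bgen r q (n - j - 2) w)"

definition Tn :: "'a set \<Rightarrow> ('a \<Rightarrow> 'a \<Rightarrow> 'a) \<Rightarrow> ('a \<Rightarrow> 'a \<Rightarrow> complex) \<Rightarrow> nat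
     \<Rightarrow> 'a list \<Rightarrow> 'a list \<Rightarrow> complex" where
  "Tn X r q n w = (\<lambda>w'. \<Sum>j<n. chain X r q n j w w')"

text \<open>F (x) id on basis words of length n+1, for F on words of length n.\<close>
definition ext_id :: "('a list \<Rightarrow> 'a list \<Rightarrow> complex) \<Rightarrow> 'a list \<Rightarrow> 'a list \<Rightarrow> complex" where
  "ext_id F w = (\<lambda>w'. if w' \<noteq> [] \<and> w \<noteq> [] \<and> last w' = last w
                       then F (butlast w) (butlast w') else 0)"

text \<open>Quantum symmetrizer: Omega_0 = id, Omega_{n+1} = (Omega_n (x) id) T_{n+1}
  (= sum over S_{n+1} of the Matsumoto lifts of the braiding).\<close>
fun qsym :: "'a set \<Rightarrow> ('a \<Rightarrow> 'a \<Rightarrow> 'a) \<Rightarrow> ('a \<Rightarrow> 'a \<Rightarrow> complex) \<Rightarrow> nat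
     \<Rightarrow> 'a list \<Rightarrow> 'a list \<Rightarrow> complex" where
  "qsym X r q 0 w = single w"
| "qsym X r q (Suc n) w = lin X (Suc n) (ext_id (qsym X r q n)) (Tn X r q (Suc n) w)"

definition fscale :: "complex \<Rightarrow> ('a list \<Rightarrow> complex) \<Rightarrow> 'a list \<Rightarrow> complex" where
  "fscale c f = (\<lambda>x. c * f x)"

text \<open>B^n = V^{(x)n} / ker Omega_n, isomorphic to the image of Omega_n.\<close>
definition nichols_comp :: "'a set \<Rightarrow> ('a \<Rightarrow> 'a \<Rightarrow> 'a) \<Rightarrow> ('a \<Rightarrow> 'a \<Rightarrow> complex) \<Rightarrow> nat
     \<Rightarrow> ('a list \<Rightarrow> complex) set" where
  "nichols_comp X r q n = Modules.module.span fscale {qsym X r q n w | w. w \<in> words X n}"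

definition nichols_dim :: "'a set \<Rightarrow> ('a \<Rightarrow> 'a \<Rightarrow> 'a) \<Rightarrow> ('a \<Rightarrow> 'a \<Rightarrow> complex) \<Rightarrow> enat" where
  "nichols_dim X r q =
     (SUP N. enat (\<Sum>n<N. Vector_Spaces.vector_space.dim fscale (nichols_comp X r q n)))"

definition negative_braiding :: "perm set \<Rightarrow> (perm \<Rightarrow> perm) \<Rightarrow> (perm \<Rightarrow> complex) \<Rightarrow> bool" where
  "negative_braiding C g \<rho> \<longleftrightarrow>
     (\<forall>t\<in>C. \<forall>u\<in>C. t \<circ> u = u \<circ> t \<longrightarrow>
        \<rho> (inv (g t) \<circ> t \<circ> g t) = -1 \<and>
        \<rho> (inv (g u) \<circ> t \<circ> g u) * \<rho> (inv (g t) \<circ> u \<circ> g t) = 1)"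

end

theory Submission
  imports Defs
begin


definition pre :: "'a \<Rightarrow> ('a list \<Rightarrow> complex) \<Rightarrow> 'a list \<Rightarrow> complex" where
  "pre x f = (\<lambda>y. case y of [] \<Rightarrow> 0 | b # y' \<Rightarrow> if b = x then f y' else 0)"

definition chiw :: "('a \<Rightarrow> 'a \<Rightarrow> complex) \<Rightarrow> 'a \<Rightarrow> 'a list \<Rightarrow> complex" where
  "chiw q a y = prod_list (map (q a) y)"

definition Wt :: "('a \<Rightarrow> 'a \<Rightarrow> complex) \<Rightarrow> 'a \<Rightarrow> ('a list \<Rightarrow> complex) \<Rightarrow> 'a list \<Rightarrow> complex" where
  "Wt q a f = (\<lambda>y. chiw q a y * f y)"

definition Der :: "('a \<Rightarrow> 'a \<Rightarrow> complex) \<Rightarrow> 'a \<Rightarrow> ('a list \<Rightarrow> complex) \<Rightarrow> 'a list \<Rightarrow> complex" where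
  "Der q a f = (\<lambda>y. \<Sum>p\<le>length y. f (take p y @ a # drop p y) * chiw q a (drop p y))"

lemma pre_Nil[simp]: "pre x f [] = 0" by (simp add: pre_def)
lemma pre_Cons[simp]: "pre x f (b # y) = (if b = x then f y else 0)" by (simp add: pre_def)

lemma chiw_Nil[simp]: "chiw q a [] = 1" by (simp add: chiw_def)
lemma chiw_Cons[simp]: "chiw q a (b # y) = q a b * chiw q a y" by (simp add: chiw_def)
lemma chiw_append[simp]: "chiw q a (xs @ ys) = chiw q a xs * chiw q a ys" by (simp add: chiw_def)

lemma Der_pre: "Der q a (pre x f) y = (if a = x then Wt q a f y else 0) + pre x (Der q a f) y"
proof (cases y)
  case Nil then show ?thesis by (simp add: Der_def Wt_def)
next
  case (Cons b y')
  have "Der q a (pre x f) y = pre x f (a # b # y') * chiw q a (b # y') +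
     (\<Sum>p\<le>length y'. pre x f (take (Suc p) (b#y') @ a # drop (Suc p) (b#y')) * chiw q a (drop (Suc p) (b#y')))"
    unfolding Der_def Cons by (simp only: length_Cons sum.atMost_Suc_shift take_0 drop_0 append_Nil)
  also have "\<dots> = (if a = x then Wt q a f y else 0) + pre x (Der q a f) y"
    by (simp add: Cons Wt_def Der_def sum_distrib_left)
  finally show ?thesis .
qed

lemma Wt_pre: "Wt q a (pre x f) y = q a x * pre x (Wt q a f) y"
  by (cases y) (auto simp: Wt_def)

lemma Der_add: "Der q a (\<lambda>y. f y + g y) y = Der q a f y + Der q a g y"
  by (simp add: Der_def sum.distrib algebra_simps)
lemma Der_diff: "Der q a (\<lambda>y. f y - g y) y = Der q a f y - Der q a g y"
  by (simp add: Der_def sum_subtractf algebra_simps)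
lemma Der_scale: "Der q a (\<lambda>y. c * f y) y = c * Der q a f y"
  by (simp add: Der_def sum_distrib_left algebra_simps)
lemma Der_zero: "Der q a (\<lambda>y. 0) y = 0"
  by (simp add: Der_def)
lemma Der_single_Nil: "Der q a (single []) y = 0"
  by (simp add: Der_def single_def)
lemma Wt_single_Nil: "Wt q a (single []) y = single [] y"
  by (simp add: Wt_def single_def)
lemma pre_add: "pre x (\<lambda>y. f y + g y) y = pre x f y + pre x g y"
  by (cases y) auto
lemma pre_diff: "pre x (\<lambda>y. f y - g y) y = pre x f y - pre x g y"
  by (cases y) auto
lemma pre_scale: "pre x (\<lambda>y. c * f y) y = c * pre x f y"
  by (cases y) auto
lemma pre_zero: "pre x (\<lambda>y. 0) y = 0"
  by (cases y) auto
lemma Wt_add: "Wt q a (\<lambda>y. f y + g y) y = Wt q a f y + Wt q a g y"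
  by (simp add: Wt_def algebra_simps)
lemma Wt_diff: "Wt q a (\<lambda>y. f y - g y) y = Wt q a f y - Wt q a g y"
  by (simp add: Wt_def algebra_simps)
lemma Wt_scale: "Wt q a (\<lambda>y. c * f y) y = c * Wt q a f y"
  by (simp add: Wt_def algebra_simps)


lemma Der_pre_fun: "Der q a (pre x f) = (\<lambda>y. (if a = x then Wt q a f y else 0) + pre x (Der q a f) y)"
  by (rule ext) (rule Der_pre)
lemma Wt_pre_fun: "Wt q a (pre x f) = (\<lambda>y. q a x * pre x (Wt q a f) y)"
  by (rule ext) (rule Wt_pre)

definition zmul :: "('a \<Rightarrow> 'a \<Rightarrow> complex) \<Rightarrow> 'a \<Rightarrow> 'a \<Rightarrow> ('a list \<Rightarrow> complex) \<Rightarrow> 'a list \<Rightarrow> complex" where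
  "zmul q t u f = (\<lambda>y. pre t (pre u f) y - q t u * pre u (pre t f) y)"

fun Zp :: "('a \<Rightarrow> 'a \<Rightarrow> complex) \<Rightarrow> 'a \<Rightarrow> 'a \<Rightarrow> nat \<Rightarrow> 'a list \<Rightarrow> complex" where
  "Zp q t u 0 = single []"
| "Zp q t u (Suc n) = zmul q t u (Zp q t u n)"

lemma Der_single_Nil_fun: "Der q a (single []) = (\<lambda>y. 0)"
  by (rule ext) (rule Der_single_Nil)
lemma Wt_single_Nil_fun: "Wt q a (single []) = single []"
  by (rule ext) (rule Wt_single_Nil)

lemmas lin_simps = Der_add Der_diff Der_scale Der_zero pre_add pre_diff pre_scale pre_zero
   Wt_add Wt_diff Wt_scale Der_pre_fun Wt_pre_fun

lemma zmul_scale: "zmul q t u (\<lambda>y. c * f y) y = c * zmul q t u f y"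
  by (cases y) (auto simp: zmul_def algebra_simps pre_def split: list.splits)
lemma zmul_zero: "zmul q t u (\<lambda>y. 0) y = 0"
  by (cases y) (auto simp: zmul_def pre_def split: list.splits)

lemma Wt_zmul: "Wt q a (zmul q t u f) y = (q a t * q a u) * zmul q t u (Wt q a f) y"
  unfolding zmul_def by (simp add: lin_simps algebra_simps)

lemma Wt_Zp: "Wt q a (Zp q t u n) y = (q a t * q a u) ^ n * Zp q t u n y"
proof (induction n arbitrary: y)
  case 0 then show ?case by (simp add: Wt_single_Nil)
next
  case (Suc n)
  have "Wt q a (Zp q t u n) = (\<lambda>y. (q a t * q a u) ^ n * Zp q t u n y)" using Suc by auto
  then show ?case by (simp add: Wt_zmul zmul_scale)
qed

lemma Der_t_zmul: assumes "t \<noteq> u" shows "Der q t (zmul q t u f) y = zmul q t u (Der q t f) y"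
  using assms unfolding zmul_def by (simp add: lin_simps algebra_simps)

lemma Der_u_zmul: assumes "t \<noteq> u"
  shows "Der q u (zmul q t u f) y = (1 - q t u * q u t) * pre t (Wt q u f) y + zmul q t u (Der q u f) y"
  using assms unfolding zmul_def by (simp add: lin_simps algebra_simps)

lemma Der_t_Zp: assumes "t \<noteq> u" shows "Der q t (Zp q t u n) y = 0"
proof (induction n arbitrary: y)
  case 0 then show ?case by (simp add: Der_single_Nil)
next
  case (Suc n)
  have "Der q t (Zp q t u n) = (\<lambda>y. 0)" using Suc by auto
  then show ?case using assms by (simp add: Der_t_zmul zmul_zero)
qed

lemma Der_tu_Zp: assumes "t \<noteq> u" and one: "q u t * q u u * (q t t * q t u) = 1"
  shows "Der q t (Der q u (Zp q t u (Suc n))) y = of_nat (Suc n) * (1 - q t u * q u t) * Zp q t u n y"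
proof (induction n arbitrary: y)
  case 0
  have "Der q u (Zp q t u (Suc 0)) = (\<lambda>y. (1 - q t u * q u t) * pre t (single []) y)"
    using assms by (auto simp: Der_u_zmul Wt_single_Nil_fun Der_single_Nil_fun zmul_zero fun_eq_iff)
  then show ?case using assms by (simp add: lin_simps Wt_single_Nil_fun Der_single_Nil_fun)
next
  case (Suc n)
  have WZ: "Wt q u (Zp q t u (Suc n)) = (\<lambda>y. (q u t * q u u) ^ Suc n * Zp q t u (Suc n) y)"
    by (rule ext) (rule Wt_Zp)
  have WZt: "Wt q t (Zp q t u (Suc n)) = (\<lambda>y. (q t t * q t u) ^ Suc n * Zp q t u (Suc n) y)"
    by (rule ext) (rule Wt_Zp)
  have DZ: "Der q t (Zp q t u (Suc n)) = (\<lambda>y. 0)" by (rule ext) (rule Der_t_Zp[OF assms(1)])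
  have IH: "Der q t (Der q u (Zp q t u (Suc n))) = (\<lambda>y. of_nat (Suc n) * (1 - q t u * q u t) * Zp q t u n y)"
    using Suc by auto
  have D1: "Der q u (Zp q t u (Suc (Suc n))) = (\<lambda>y. (1 - q t u * q u t) * ((q u t * q u u) ^ Suc n * pre t (Zp q t u (Suc n)) y) + zmul q t u (Der q u (Zp q t u (Suc n))) y)"
    by (rule ext) (simp only: Der_u_zmul[OF assms(1)] Zp.simps(2)[of q t u "Suc n"] WZ pre_scale)
  have "Der q t (Der q u (Zp q t u (Suc (Suc n)))) y =
     (1 - q t u * q u t) * ((q u t * q u u) ^ Suc n * ((q t t * q t u) ^ Suc n * Zp q t u (Suc n) y))
     + zmul q t u (\<lambda>y. of_nat (Suc n) * (1 - q t u * q u t) * Zp q t u n y) y"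
    unfolding D1 using assms by (simp add: lin_simps WZt DZ Der_t_zmul IH del: Zp.simps)
  also have "\<dots> = (1 - q t u * q u t) * ((q u t * q u u * (q t t * q t u)) ^ Suc n) * Zp q t u (Suc n) y
     + of_nat (Suc n) * (1 - q t u * q u t) * Zp q t u (Suc n) y"
    by (simp only: zmul_scale Zp.simps(2)[symmetric]) (simp add: power_mult_distrib algebra_simps del: Zp.simps)
  also have "\<dots> = of_nat (Suc (Suc n)) * (1 - q t u * q u t) * Zp q t u (Suc n) y"
    using one by (simp add: algebra_simps del: Zp.simps)
  finally show ?case .
qed

fun Pp :: "'a \<Rightarrow> nat \<Rightarrow> 'a list \<Rightarrow> complex" where
  "Pp t 0 = single []"
| "Pp t (Suc n) = pre t (Pp t n)"

lemma Wt_Pp: "Wt q t (Pp t n) y = q t t ^ n * Pp t n y"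
proof (induction n arbitrary: y)
  case 0 then show ?case by (simp add: Wt_single_Nil)
next
  case (Suc n)
  have "Wt q t (Pp t n) = (\<lambda>y. q t t ^ n * Pp t n y)" using Suc by auto
  then show ?case by (simp add: Wt_pre pre_scale)
qed

lemma Der_Pp: assumes "q t t = 1" shows "Der q t (Pp t (Suc n)) y = of_nat (Suc n) * Pp t n y"
proof (induction n arbitrary: y)
  case 0 then show ?case by (simp add: Der_pre Wt_single_Nil_fun Der_single_Nil_fun pre_zero)
next
  case (Suc n)
  have IH: "Der q t (Pp t (Suc n)) = (\<lambda>y. of_nat (Suc n) * Pp t n y)" using Suc by auto
  have W: "Wt q t (Pp t (Suc n)) y = Pp t (Suc n) y" using Wt_Pp[of q t "Suc n" y] assms by simp
  show ?case by (simp only: Pp.simps(2)[of t "Suc n"] Der_pre IH pre_scale W) (simp add: algebra_simps)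
qed



definition mv :: "nat \<Rightarrow> 'a list \<Rightarrow> 'a list" where
  "mv p w = take p w @ drop (Suc p) w @ [w!p]"
definition cf :: "('a \<Rightarrow> 'a \<Rightarrow> complex) \<Rightarrow> nat \<Rightarrow> 'a list \<Rightarrow> complex" where
  "cf q p w = chiw q (w!p) (drop (Suc p) w)"

lemma mv_split: "length xs = i \<Longrightarrow> mv i (xs @ a # zs) = xs @ zs @ [a]"
  by (simp add: mv_def nth_append)
lemma cf_split: "length xs = i \<Longrightarrow> cf q i (xs @ a # zs) = chiw q a zs"
  by (simp add: cf_def nth_append)

lemma finite_words: "finite X \<Longrightarrow> finite (words X n)"
  unfolding words_def using finite_lists_length_eq[of X n] by (simp add: conj_commute)

lemma lin_single:
  assumes "finite X" "w1 \<in> words X n"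
  shows "lin X n F (\<lambda>w'. if w' = w1 then c else 0) = (\<lambda>z. c * F w1 z)"
proof (rule ext)
  fix z
  have "(\<Sum>w\<in>words X n. (if w = w1 then c else 0) * F w z) = (\<Sum>w\<in>words X n. if w = w1 then c * F w z else 0)"
    by (rule sum.cong) auto
  also have "\<dots> = c * F w1 z" using sum.delta[OF finite_words[OF assms(1)], of w1 "\<lambda>w. c * F w z"] assms(2) by simp
  finally show "lin X n F (\<lambda>w'. if w' = w1 then c else 0) z = c * F w1 z" by (simp add: lin_def)
qed

lemma chain_formula:
  assumes fin: "finite X" and SX: "S \<subseteq> X" and comm: "\<forall>a\<in>S. \<forall>b\<in>S. r a b = b"
  shows "j < n \<Longrightarrow> w \<in> words S n \<Longrightarrow>
     chain X r q n j w = (\<lambda>w'. if w' = mv (n - Suc j) w then cf q (n - Suc j) w else 0)"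
proof (induction j arbitrary: w)
  case 0
  then have len: "length w = n" by (simp add: words_def)
  then obtain m where n: "n = Suc m" using 0 by (cases n) auto
  have "take (Suc m) w = take m w @ [w!m]" by (rule take_Suc_conv_app_nth) (simp add: len n)
  then have w: "w = take m w @ [w ! m]" using len n by simp
  have mw: "mv m w = w" "cf q m w = 1" using len n by (simp_all add: mv_def cf_def) (subst (2) w, simp)
  have e: "n - Suc 0 = m" using n by simp
  show ?case unfolding e mw by (simp add: single_def)
next
  case (Suc j)
  from Suc.prems have len: "length w = n" and setw: "set w \<subseteq> S" by (auto simp: words_def)
  define i where "i = n - Suc (Suc j)"
  have ilt: "Suc i < n" using Suc.prems(1) by (simp add: i_def)
  define xs where "xs = take i w"
  define a where "a = w ! i"
  define b where "b = w ! Suc i"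
  define ys where "ys = drop (Suc (Suc i)) w"
  have w: "w = xs @ a # b # ys"
    unfolding xs_def a_def b_def ys_def using ilt len
    by (metis Cons_nth_drop_Suc Suc_lessD append_take_drop_id)
  have lxs: "length xs = i" using ilt len by (simp add: xs_def)
  have abS: "a \<in> S" "b \<in> S" using setw w by auto
  have rab: "r a b = b" using comm abS by auto
  define w1 where "w1 = xs @ b # a # ys"
  have w1S: "w1 \<in> words S n" using setw len w by (auto simp: w1_def words_def)
  have w1X: "w1 \<in> words X n" using w1S SX by (auto simp: words_def)
  have upd: "w[i := r (w!i) (w!Suc i), Suc i := w!i] = w1"
    unfolding w w1_def using lxs rab by (simp add: list_update_append nth_append)
  have bg: "bgen r q (n - j - 2) w = (\<lambda>w'. if w' = w1 then q a b else 0)"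
  proof -
    have e: "n - j - 2 = i" by (simp add: i_def)
    show ?thesis unfolding bgen_def e a_def b_def using ilt len upd by simp
  qed
  have IH: "chain X r q n j w1 = (\<lambda>w'. if w' = mv (n - Suc j) w1 then cf q (n - Suc j) w1 else 0)"
    using Suc.IH[OF _ w1S] Suc.prems(1) by simp
  have nj: "n - Suc j = Suc i" using Suc.prems(1) by (simp add: i_def)
  have m1: "mv (n - Suc j) w1 = mv i w"
    unfolding nj w w1_def using lxs mv_split[of "xs @ [b]" "Suc i" a ys] mv_split[of xs i a "b # ys"] by simp
  have c1: "q a b * cf q (n - Suc j) w1 = cf q i w"
    unfolding nj w w1_def using lxs cf_split[of "xs @ [b]" "Suc i" q a ys] cf_split[of xs i q a "b # ys"] by simp
  have "chain X r q n (Suc j) w = (\<lambda>z. q a b * chain X r q n j w1 z)"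
    using bg lin_single[OF fin w1X] by simp
  also have "\<dots> = (\<lambda>w'. if w' = mv i w then cf q i w else 0)"
    unfolding IH m1 c1[symmetric] by auto
  finally show ?case unfolding i_def .

qed

lemma Tn_formula:
  assumes fin: "finite X" and SX: "S \<subseteq> X" and comm: "\<forall>a\<in>S. \<forall>b\<in>S. r a b = b"
    and w: "w \<in> words S n"
  shows "Tn X r q n w w' = (\<Sum>p<n. if w' = mv p w then cf q p w else 0)"
proof -
  have "Tn X r q n w w' = (\<Sum>j<n. if w' = mv (n - Suc j) w then cf q (n - Suc j) w else 0)"
    unfolding Tn_def using chain_formula[OF fin SX comm _ w] by (auto intro!: sum.cong)
  also have "\<dots> = (\<Sum>p<n. if w' = mv p w then cf q p w else 0)"
    by (rule sum.nat_diff_reindex)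
  finally show ?thesis .
qed

lemma mv_iff:
  assumes "p < length w"
  shows "(y @ [a] = mv p w) \<longleftrightarrow> (p \<le> length y \<and> w = take p y @ a # drop p y)"
proof
  assume h: "y @ [a] = mv p w"
  then have a: "a = w ! p" and y: "y = take p w @ drop (Suc p) w" by (auto simp: mv_def)
  have ly: "length y = length w - 1" using y assms by simp
  have "take p y = take p w" "drop p y = drop (Suc p) w" using y assms by simp_all
  then show "p \<le> length y \<and> w = take p y @ a # drop p y"
    using ly assms a by (simp add: id_take_nth_drop[symmetric])
next
  assume h: "p \<le> length y \<and> w = take p y @ a # drop p y"
  then show "y @ [a] = mv p w" using mv_split[of "take p y" p a "drop p y"] by simp
qed

lemma Dv_Der:
  assumes fin: "finite X" and SX: "S \<subseteq> X" and comm: "\<forall>a\<in>S. \<forall>b\<in>S. r a b = b"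
    and aS: "a \<in> S" and supp: "\<forall>w. v w \<noteq> 0 \<longrightarrow> w \<in> words S (Suc n)"
  shows "lin X (Suc n) (Tn X r q (Suc n)) v (y @ [a]) = Der q a v y"
proof -
  let ?WS = "words S (Suc n)"
  have WSX: "?WS \<subseteq> words X (Suc n)" using SX by (auto simp: words_def)
  have finS: "finite ?WS" using finite_words[of S] fin SX finite_subset by blast
  have "lin X (Suc n) (Tn X r q (Suc n)) v (y @ [a]) = (\<Sum>w\<in>words X (Suc n). v w * Tn X r q (Suc n) w (y @ [a]))"
    by (simp add: lin_def)
  also have "\<dots> = (\<Sum>w\<in>?WS. v w * Tn X r q (Suc n) w (y @ [a]))"
    by (rule sum.mono_neutral_right[OF finite_words[OF fin] WSX]) (use supp in auto)
  also have "\<dots> = (\<Sum>w\<in>?WS. \<Sum>p<Suc n. v w * (if y @ [a] = mv p w then cf q p w else 0))"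
  proof (rule sum.cong[OF refl])
    fix w assume w: "w \<in> ?WS"
    show "v w * Tn X r q (Suc n) w (y @ [a]) = (\<Sum>p<Suc n. v w * (if y @ [a] = mv p w then cf q p w else 0))"
      by (simp only: Tn_formula[OF fin SX comm w] sum_distrib_left)
  qed
  also have "\<dots> = (\<Sum>p<Suc n. \<Sum>w\<in>?WS. v w * (if y @ [a] = mv p w then cf q p w else 0))"
    by (rule sum.swap)
  also have "\<dots> = (\<Sum>p<Suc n. if p \<le> length y then v (take p y @ a # drop p y) * chiw q a (drop p y) else 0)"
  proof (rule sum.cong[OF refl])
    fix p assume p: "p \<in> {..<Suc n}"
    let ?i = "take p y @ a # drop p y"
    have "(\<Sum>w\<in>?WS. v w * (if y @ [a] = mv p w then cf q p w else 0)) =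
          (\<Sum>w\<in>?WS. if w = ?i then (if p \<le> length y then v w * chiw q a (drop p y) else 0) else 0)"
    proof (rule sum.cong[OF refl])
      fix w assume w: "w \<in> ?WS"
      then have pl: "p < length w" using p by (simp add: words_def)
      show "v w * (if y @ [a] = mv p w then cf q p w else 0) =
          (if w = ?i then (if p \<le> length y then v w * chiw q a (drop p y) else 0) else 0)"
        using mv_iff[OF pl, of y a] cf_split[of "take p y" p q a "drop p y"] by auto
    qed
    also have "\<dots> = (if ?i \<in> ?WS then (if p \<le> length y then v ?i * chiw q a (drop p y) else 0) else 0)"
      by (rule sum.delta[OF finS])
    also have "\<dots> = (if p \<le> length y then v ?i * chiw q a (drop p y) else 0)"
      using supp by auto
    finally show "(\<Sum>w\<in>?WS. v w * (if y @ [a] = mv p w then cf q p w else 0)) =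
       (if p \<le> length y then v ?i * chiw q a (drop p y) else 0)" .
  qed
  also have "\<dots> = Der q a v y"
  proof (cases "length y = n")
    case True
    then show ?thesis unfolding Der_def by (intro sum.cong) auto
  next
    case False
    have z: "v (take p y @ a # drop p y) = 0" for p
      using supp False by (force simp: words_def)
    show ?thesis unfolding Der_def by (simp add: z cong: if_cong)
  qed
  finally show ?thesis .
qed

lemma lemmaA:
  assumes fin: "finite X" and aX: "a \<in> X"
  shows "lin X (Suc n) (qsym X r q (Suc n)) v (y @ [a]) =
         lin X n (qsym X r q n) (\<lambda>y1. lin X (Suc n) (Tn X r q (Suc n)) v (y1 @ [a])) y"
proof -
  let ?T = "Tn X r q (Suc n)"
  have key: "(\<Sum>w1\<in>words X (Suc n). ?T w w1 * ext_id (qsym X r q n) w1 (y @ [a])) =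
             (\<Sum>y1\<in>words X n. ?T w (y1 @ [a]) * qsym X r q n y1 y)" for w
  proof -
    have inj: "inj_on (\<lambda>y1. y1 @ [a]) (words X n)" by (auto simp: inj_on_def)
    have sub: "(\<lambda>y1. y1 @ [a]) ` words X n \<subseteq> words X (Suc n)" using aX by (auto simp: words_def)
    have "(\<Sum>y1\<in>words X n. ?T w (y1 @ [a]) * qsym X r q n y1 y) =
          (\<Sum>w1\<in>(\<lambda>y1. y1 @ [a]) ` words X n. ?T w w1 * qsym X r q n (butlast w1) y)"
      by (simp add: sum.reindex[OF inj])
    also have "\<dots> = (\<Sum>w1\<in>words X (Suc n). ?T w w1 * ext_id (qsym X r q n) w1 (y @ [a]))"
    proof (rule sum.mono_neutral_cong_left[OF finite_words[OF fin] sub])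
      show "\<forall>i\<in>words X (Suc n) - (\<lambda>y1. y1 @ [a]) ` words X n. ?T w i * ext_id (qsym X r q n) i (y @ [a]) = 0"
      proof
        fix i assume i: "i \<in> words X (Suc n) - (\<lambda>y1. y1 @ [a]) ` words X n"
        then have ne: "i \<noteq> []" by (auto simp: words_def)
        have "last i \<noteq> a"
        proof
          assume "last i = a"
          then have "i = butlast i @ [a]" using ne by (metis append_butlast_last_id)
          moreover have "butlast i \<in> words X n" using i by (auto simp: words_def dest: in_set_butlastD)
          ultimately show False using i by blast
        qed
        then show "?T w i * ext_id (qsym X r q n) i (y @ [a]) = 0" by (simp add: ext_id_def)
      qed
      show "\<And>x. x \<in> (\<lambda>y1. y1 @ [a]) ` words X n \<Longrightarrow>
           ?T w x * qsym X r q n (butlast x) y = ?T w x * ext_id (qsym X r q n) x (y @ [a])"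
        by (auto simp: ext_id_def)
    qed
    finally show ?thesis by simp
  qed
  have "lin X (Suc n) (qsym X r q (Suc n)) v (y @ [a]) =
        (\<Sum>w\<in>words X (Suc n). v w * (\<Sum>y1\<in>words X n. ?T w (y1 @ [a]) * qsym X r q n y1 y))"
    by (simp add: lin_def key)
  also have "\<dots> = (\<Sum>y1\<in>words X n. (\<Sum>w\<in>words X (Suc n). v w * ?T w (y1 @ [a])) * qsym X r q n y1 y)"
    by (simp add: sum_distrib_left sum_distrib_right mult.assoc) (rule sum.swap)
  also have "\<dots> = lin X n (qsym X r q n) (\<lambda>y1. lin X (Suc n) ?T v (y1 @ [a])) y"
    by (simp add: lin_def)
  finally show ?thesis .
qed



lemma step:
  assumes fin: "finite X" and SX: "S \<subseteq> X" and comm: "\<forall>a\<in>S. \<forall>b\<in>S. r a b = b"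
    and aS: "a \<in> S" and supp: "\<forall>w. v w \<noteq> 0 \<longrightarrow> w \<in> words S (Suc n)"
  shows "lin X (Suc n) (qsym X r q (Suc n)) v (y @ [a]) = lin X n (qsym X r q n) (Der q a v) y"
proof -
  have "(\<lambda>y1. lin X (Suc n) (Tn X r q (Suc n)) v (y1 @ [a])) = Der q a v"
    using Dv_Der[OF fin SX comm aS supp] by auto
  then show ?thesis using lemmaA[OF fin, of a n r q v y] aS SX by auto
qed

lemma Der_supp:
  assumes aS: "a \<in> S" and supp: "\<forall>w. v w \<noteq> 0 \<longrightarrow> w \<in> words S (Suc n)"
  shows "\<forall>y. Der q a v y \<noteq> 0 \<longrightarrow> y \<in> words S n"
proof (intro allI impI)
  fix y assume "Der q a v y \<noteq> 0"
  then obtain p where p: "p \<le> length y" "v (take p y @ a # drop p y) \<noteq> 0"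
    unfolding Der_def by (metis (no_types, lifting) atMost_iff mult_eq_0_iff sum.neutral)
  then have w: "take p y @ a # drop p y \<in> words S (Suc n)" using supp by blast
  have sy: "set y = set (take p y) \<union> set (drop p y)" by (metis append_take_drop_id set_append)
  have "length (take p y @ a # drop p y) = Suc (length y)" using p(1) by simp
  then show "y \<in> words S n" using w sy unfolding words_def by auto
qed

lemma lin_scale: "lin X n F (\<lambda>y. c * f y) y = c * lin X n F f y"
  by (simp add: lin_def sum_distrib_left mult.assoc)

lemma vs_fscale: "Vector_Spaces.vector_space (fscale :: complex \<Rightarrow> ('a list \<Rightarrow> complex) \<Rightarrow> _)"
  by unfold_locales (auto simp: fscale_def fun_eq_iff algebra_simps)

lemma dim_pos:
  assumes fin: "finite X" and nz: "\<exists>v y. lin X n (qsym X r q n) v y \<noteq> 0"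
  shows "Vector_Spaces.vector_space.dim fscale (nichols_comp X r q n) \<ge> 1"
proof -
  interpret vs: vector_space "fscale :: complex \<Rightarrow> ('a list \<Rightarrow> complex) \<Rightarrow> _" by (rule vs_fscale)
  let ?G = "{qsym X r q n w | w. w \<in> words X n}"
  obtain w where w: "w \<in> words X n" "qsym X r q n w \<noteq> 0"
  proof -
    from nz obtain v y where "lin X n (qsym X r q n) v y \<noteq> 0" by blast
    then obtain w where "w \<in> words X n" "qsym X r q n w y \<noteq> 0"
      unfolding lin_def by (metis (no_types, lifting) mult_eq_0_iff sum.neutral)
    then show ?thesis using that by fastforce
  qed
  have finG: "finite ?G" using finite_words[OF fin, of n] by (simp add: setcompr_eq_image)
  have "vs.dim ?G \<noteq> 0"
  proof
    assume d0: "vs.dim ?G = 0"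
    obtain B where B: "B \<subseteq> ?G" "vs.independent B" "?G \<subseteq> vs.span B" "card B = vs.dim ?G"
      by (rule vs.basis_exists)
    have "finite B" using B(1) finG finite_subset by blast
    then have "B = {}" using B(4) d0 by simp
    then have "?G \<subseteq> {0}" using B(3) vs.span_empty by simp
    then show False using w by blast
  qed
  then show ?thesis unfolding nichols_comp_def using vs.dim_span by simp
qed

lemma dim_infinite:
  assumes fin: "finite X" and nz: "\<forall>n. \<exists>v y. lin X n (qsym X r q n) v y \<noteq> 0"
  shows "nichols_dim X r q = \<infinity>"
proof (rule ccontr)
  let ?d = "\<lambda>n. Vector_Spaces.vector_space.dim fscale (nichols_comp X r q n)"
  assume "nichols_dim X r q \<noteq> \<infinity>"
  then obtain m where m: "nichols_dim X r q = enat m" by auto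
  have "enat (\<Sum>n<Suc m. ?d n) \<le> nichols_dim X r q"
    unfolding nichols_dim_def by (rule SUP_upper) simp
  moreover have "(\<Sum>n<Suc m. ?d n) \<ge> (\<Sum>n<Suc m. 1)"
    by (rule sum_mono) (use dim_pos[OF fin] nz in auto)
  ultimately show False using m by simp
qed


lemma words_0: "words X 0 = {[]}" by (auto simp: words_def)

lemma base0: "lin X 0 (qsym X r q 0) (single []) [] = 1"
  by (simp add: lin_def words_0 single_def)

lemma Pp_supp: "\<forall>y. Pp t n y \<noteq> 0 \<longrightarrow> y \<in> words {t} n"
proof (induction n)
  case 0 then show ?case by (simp add: single_def words_def)
next
  case (Suc n)
  show ?case
  proof (intro allI impI)
    fix y assume "Pp t (Suc n) y \<noteq> 0"
    then obtain y' where "y = t # y'" "Pp t n y' \<noteq> 0" by (cases y) (auto split: if_splits)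
    then show "y \<in> words {t} (Suc n)" using Suc by (auto simp: words_def)
  qed
qed

lemma Zp_supp: "\<forall>y. Zp q t u n y \<noteq> 0 \<longrightarrow> y \<in> words {t, u} (2 * n)"
proof (induction n)
  case 0 then show ?case by (simp add: single_def words_def)
next
  case (Suc n)
  show ?case
  proof (intro allI impI)
    fix y assume h: "Zp q t u (Suc n) y \<noteq> 0"
    then obtain y' where y: "y = t # u # y' \<or> y = u # t # y'" and z: "Zp q t u n y' \<noteq> 0"
      by (cases y rule: remdups_adj.cases) (auto simp: zmul_def split: if_splits)
    have "y' \<in> words {t, u} (2 * n)" using Suc z by blast
    then show "y \<in> words {t, u} (2 * Suc n)" using y by (auto simp: words_def)
  qed
qed

lemma words_mono: "S \<subseteq> T \<Longrightarrow> w \<in> words S n \<Longrightarrow> w \<in> words T n"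
  by (auto simp: words_def)

lemma inf_single:
  assumes fin: "finite X" and tX: "t \<in> X" and rtt: "r t t = t" and qtt: "q t t = 1"
  shows "nichols_dim X r q = \<infinity>"
proof (rule dim_infinite[OF fin], intro allI)
  fix n
  have SX: "{t} \<subseteq> X" using tX by simp
  have comm: "\<forall>a\<in>{t}. \<forall>b\<in>{t}. r a b = b" using rtt by simp
  have "\<exists>y. lin X n (qsym X r q n) (Pp t n) y \<noteq> 0"
  proof (induction n)
    case 0 show ?case by (rule exI[of _ "[]"]) (simp add: lin_def words_0 single_def)
  next
    case (Suc n)
    then obtain y where y: "lin X n (qsym X r q n) (Pp t n) y \<noteq> 0" by blast
    have "lin X (Suc n) (qsym X r q (Suc n)) (Pp t (Suc n)) (y @ [t]) =
          lin X n (qsym X r q n) (Der q t (Pp t (Suc n))) y"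
      by (rule step[OF fin SX comm]) (simp, rule Pp_supp)
    also have "Der q t (Pp t (Suc n)) = (\<lambda>y. of_nat (Suc n) * Pp t n y)"
      by (rule ext) (rule Der_Pp[of q t, OF qtt])
    finally show ?case using y lin_scale[of X n "qsym X r q n" "of_nat (Suc n)" "Pp t n" y]
      by (metis mult_eq_0_iff of_nat_eq_0_iff nat.distinct(1))
  qed
  then show "\<exists>v y. lin X n (qsym X r q n) v y \<noteq> 0" by blast
qed

lemma inf_pair:
  assumes fin: "finite X" and tX: "t \<in> X" and uX: "u \<in> X" and tu: "t \<noteq> u"
    and comm: "\<forall>a\<in>{t,u}. \<forall>b\<in>{t,u}. r a b = b"
    and one: "q u t * q u u * (q t t * q t u) = 1" and ne: "q t u * q u t \<noteq> 1"
  shows "nichols_dim X r q = \<infinity>"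
proof (rule dim_infinite[OF fin], intro allI)
  have SX: "{t,u} \<subseteq> X" using tX uX by simp
  have supZ: "\<forall>w. Zp q t u n w \<noteq> 0 \<longrightarrow> w \<in> words {t,u} (2 * n)" for n by (rule Zp_supp)
  have supD: "\<forall>y. Der q u (Zp q t u (Suc n)) y \<noteq> 0 \<longrightarrow> y \<in> words {t,u} (Suc (2 * n))" for n
    by (rule Der_supp) (use supZ[of "Suc n"] in auto)
  have main: "\<exists>y. lin X (2*n) (qsym X r q (2*n)) (Zp q t u n) y \<noteq> 0 \<and>
     lin X (Suc (2*n)) (qsym X r q (Suc (2*n))) (Der q u (Zp q t u (Suc n))) (y @ [t]) \<noteq> 0" for n
  proof (induction n)
    case 0
    have "lin X (Suc 0) (qsym X r q (Suc 0)) (Der q u (Zp q t u (Suc 0))) ([] @ [t]) =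
          lin X 0 (qsym X r q 0) (Der q t (Der q u (Zp q t u (Suc 0)))) []"
      by (rule step[OF fin SX comm]) (use supD[of 0] in auto)
    also have "Der q t (Der q u (Zp q t u (Suc 0))) = (\<lambda>y. of_nat (Suc 0) * (1 - q t u * q u t) * Zp q t u 0 y)"
      by (rule ext) (rule Der_tu_Zp[OF tu one])
    also have "lin X 0 (qsym X r q 0) (\<lambda>y. of_nat (Suc 0) * (1 - q t u * q u t) * Zp q t u 0 y) [] = 1 - q t u * q u t"
      by (simp add: lin_def words_0 single_def)
    finally have f0: "lin X (Suc 0) (qsym X r q (Suc 0)) (Der q u (Zp q t u (Suc 0))) ([] @ [t]) = 1 - q t u * q u t" .
    show ?case
    proof (intro exI[of _ "[]"] conjI)
      show "lin X (2*0) (qsym X r q (2*0)) (Zp q t u 0) [] \<noteq> 0" by (simp add: lin_def words_0 single_def)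
      show "lin X (Suc (2*0)) (qsym X r q (Suc (2*0))) (Der q u (Zp q t u (Suc 0))) ([] @ [t]) \<noteq> 0"
        using ne by (simp only: mult_0_right f0) simp
    qed
  next
    case (Suc n)
    then obtain y where y: "lin X (2*n) (qsym X r q (2*n)) (Zp q t u n) y \<noteq> 0" by blast
    have e1: "lin X (Suc (Suc (2*n))) (qsym X r q (Suc (Suc (2*n)))) (Zp q t u (Suc n)) ((y @ [t]) @ [u]) =
          lin X (Suc (2*n)) (qsym X r q (Suc (2*n))) (Der q u (Zp q t u (Suc n))) (y @ [t])"
      by (rule step[OF fin SX comm]) (use supZ[of "Suc n"] in auto)
    have e2: "lin X (Suc (2*n)) (qsym X r q (Suc (2*n))) (Der q u (Zp q t u (Suc n))) (y @ [t]) =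
          lin X (2*n) (qsym X r q (2*n)) (Der q t (Der q u (Zp q t u (Suc n)))) y"
      by (rule step[OF fin SX comm]) (use supD[of n] in auto)
    have e3: "Der q t (Der q u (Zp q t u (Suc n))) = (\<lambda>y. of_nat (Suc n) * (1 - q t u * q u t) * Zp q t u n y)"
      by (rule ext) (rule Der_tu_Zp[OF tu one])
    have n1: "1 - q t u * q u t \<noteq> 0" using ne by simp
    have nz: "of_nat (Suc n) * (1 - q t u * q u t) \<noteq> 0"
      using n1 of_nat_neq_0[where 'a=complex] by (metis mult_eq_0_iff)
    have A: "lin X (Suc (2*n)) (qsym X r q (Suc (2*n))) (Der q u (Zp q t u (Suc n))) (y @ [t]) \<noteq> 0"
      unfolding e2 e3 lin_scale using nz y by (metis mult_eq_0_iff)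
    have B: "lin X (Suc (Suc (2*n))) (qsym X r q (Suc (Suc (2*n)))) (Zp q t u (Suc n)) ((y @ [t]) @ [u]) \<noteq> 0"
      unfolding e1 by (rule A)
    obtain y2 where y2: "lin X (Suc (Suc (2*n))) (qsym X r q (Suc (Suc (2*n)))) (Zp q t u (Suc n)) y2 \<noteq> 0"
      using B by blast
    have e2': "lin X (Suc (Suc (Suc (2*n)))) (qsym X r q (Suc (Suc (Suc (2*n))))) (Der q u (Zp q t u (Suc (Suc n)))) (y2 @ [t]) =
          lin X (Suc (Suc (2*n))) (qsym X r q (Suc (Suc (2*n)))) (Der q t (Der q u (Zp q t u (Suc (Suc n))))) y2"
      by (rule step[OF fin SX comm]) (use supD[of "Suc n"] in auto)
    have e3': "Der q t (Der q u (Zp q t u (Suc (Suc n)))) = (\<lambda>y. of_nat (Suc (Suc n)) * (1 - q t u * q u t) * Zp q t u (Suc n) y)"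
      by (rule ext) (rule Der_tu_Zp[OF tu one])
    have nz': "of_nat (Suc (Suc n)) * (1 - q t u * q u t) \<noteq> 0"
      using n1 of_nat_neq_0[where 'a=complex] by (metis mult_eq_0_iff)
    have C: "lin X (Suc (Suc (Suc (2*n)))) (qsym X r q (Suc (Suc (Suc (2*n))))) (Der q u (Zp q t u (Suc (Suc n)))) (y2 @ [t]) \<noteq> 0"
      unfolding e2' e3' lin_scale using nz' y2 by (metis mult_eq_0_iff)
    have eq: "2 * Suc n = Suc (Suc (2*n))" by simp
    show ?case unfolding eq using y2 C by blast
  qed
  fix m
  show "\<exists>v y. lin X m (qsym X r q m) v y \<noteq> 0"
  proof (cases "even m")
    case True
    define n where "n = m div 2"
    have mn: "m = 2 * n" using True unfolding n_def by presburger
    from main[of n] obtain y where "lin X (2*n) (qsym X r q (2*n)) (Zp q t u n) y \<noteq> 0" by blast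
    then show ?thesis unfolding mn by blast
  next
    case False
    define n where "n = m div 2"
    have mn: "m = Suc (2 * n)" using False unfolding n_def by presburger
    from main[of n] obtain y where "lin X (Suc (2*n)) (qsym X r q (Suc (2*n))) (Der q u (Zp q t u (Suc n))) (y @ [t]) \<noteq> 0" by blast
    then show ?thesis unfolding mn by blast
  qed
qed



definition kinv :: "nat \<Rightarrow> perm" where
  "kinv k = (\<lambda>i. if 1 < i \<and> i \<le> k then i - 1 else if i = 1 then k else i)"

definition refl_k :: "nat \<Rightarrow> perm" where
  "refl_k k = (\<lambda>i. if 1 \<le> i \<and> i \<le> k then k + 1 - i else i)"

lemma kc_kinv: "k \<ge> 2 \<Longrightarrow> kcycle k \<circ> kinv k = id"
  by (auto simp: fun_eq_iff kcycle_def kinv_def)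
lemma kinv_kc: "k \<ge> 2 \<Longrightarrow> kinv k \<circ> kcycle k = id"
  by (auto simp: fun_eq_iff kcycle_def kinv_def)
lemma kc_kinv_pt: "k \<ge> 2 \<Longrightarrow> kcycle k (kinv k x) = x"
  using kc_kinv by (metis comp_apply id_apply)
lemma kinv_kc_pt: "k \<ge> 2 \<Longrightarrow> kinv k (kcycle k x) = x"
  using kinv_kc by (metis comp_apply id_apply)

lemma bij_kc: "k \<ge> 2 \<Longrightarrow> bij (kcycle k)"
  using o_bij[OF kinv_kc kc_kinv] by simp
lemma bij_kinv: "k \<ge> 2 \<Longrightarrow> bij (kinv k)"
  using o_bij[OF kc_kinv kinv_kc] by simp
lemma inv_kc: "k \<ge> 2 \<Longrightarrow> inv (kcycle k) = kinv k"
  by (rule inv_unique_comp[OF kc_kinv kinv_kc])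
lemma inv_kinv: "k \<ge> 2 \<Longrightarrow> inv (kinv k) = kcycle k"
  by (rule inv_unique_comp[OF kinv_kc kc_kinv])

lemma permutesI2: "bij p \<Longrightarrow> (\<And>x. x \<notin> S \<Longrightarrow> p x = x) \<Longrightarrow> p permutes S"
  unfolding permutes_def using bij_iff by metis

lemma kc_permutes: "k \<ge> 2 \<Longrightarrow> kcycle k permutes {1..k}"
  by (rule permutesI2[OF bij_kc]) (auto simp: kcycle_def)

lemma refl_refl: "refl_k k \<circ> refl_k k = id"
  by (auto simp: fun_eq_iff refl_k_def)
lemma bij_refl: "bij (refl_k k)"
  using o_bij[OF refl_refl refl_refl] by simp
lemma inv_refl: "inv (refl_k k) = refl_k k"
  by (rule inv_unique_comp[OF refl_refl refl_refl])
lemma refl_permutes: "refl_k k permutes {1..k}"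
  by (rule permutesI2[OF bij_refl]) (auto simp: refl_k_def)

lemma refl_conj: "k \<ge> 2 \<Longrightarrow> refl_k k \<circ> kcycle k \<circ> inv (refl_k k) = kinv k"
  unfolding inv_refl by (auto simp: fun_eq_iff refl_k_def kcycle_def kinv_def)

lemma conj_class_image: "conj_class G s = (\<lambda>g. g \<circ> s \<circ> inv g) ` G"
  unfolding conj_class_def by blast

lemma finite_C: "finite (conj_class (Sk k) s)"
  unfolding conj_class_image Sk_def using finite_permutations[of "{1..k}"] by simp

lemma kc_in_C: "k \<ge> 2 \<Longrightarrow> kcycle k \<in> conj_class (Sk k) (kcycle k)"
  unfolding conj_class_image Sk_def
  by (rule image_eqI[of _ _ id]) (simp_all add: permutes_id)

lemma kinv_in_C: "k \<ge> 2 \<Longrightarrow> kinv k \<in> conj_class (Sk k) (kcycle k)"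
  unfolding conj_class_image Sk_def
  by (rule image_eqI[of _ _ "refl_k k"]) (use refl_permutes[of k] refl_conj[of k] in simp_all)

lemma kc_pow: "k \<ge> 1 \<Longrightarrow> kcycle k ^^ j = (\<lambda>i. if 1 \<le> i \<and> i \<le> k then (i - 1 + j) mod k + 1 else i)"
proof (induction j)
  case 0 then show ?case by (auto simp: fun_eq_iff)
next
  case (Suc j)
  show ?case
  proof (rule ext)
    fix i
    show "(kcycle k ^^ Suc j) i = (if 1 \<le> i \<and> i \<le> k then (i - 1 + Suc j) mod k + 1 else i)"
    proof (cases "1 \<le> i \<and> i \<le> k")
      case True
      let ?m = "(i - 1 + j) mod k"
      have mk: "?m < k" using Suc.prems by simp
      have "(kcycle k ^^ Suc j) i = kcycle k (?m + 1)" using Suc True by simp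
      also have "\<dots> = (if Suc ?m = k then 1 else ?m + 2)" using mk by (auto simp: kcycle_def)
      also have "\<dots> = (i - 1 + Suc j) mod k + 1"
        by (simp only: add_Suc_right mod_Suc) auto
      finally show ?thesis using True by simp
    next
      case False
      have "(kcycle k ^^ Suc j) i = kcycle k ((kcycle k ^^ j) i)" by simp
      also have "(kcycle k ^^ j) i = i" unfolding Suc.IH[OF Suc.prems] by (rule if_not_P[OF False])
      also have "kcycle k i = i" using False Suc.prems by (auto simp: kcycle_def)
      finally have "(kcycle k ^^ Suc j) i = i" .
      then show ?thesis by (simp only: if_not_P[OF False])
    qed
  qed
qed

lemma kc_pow_pt: "k \<ge> 1 \<Longrightarrow> 1 \<le> i \<Longrightarrow> i \<le> k \<Longrightarrow> (kcycle k ^^ j) i = (i - 1 + j) mod k + 1"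
  by (subst kc_pow) auto
lemma kc_pow_out: "k \<ge> 1 \<Longrightarrow> \<not> (1 \<le> i \<and> i \<le> k) \<Longrightarrow> (kcycle k ^^ j) i = i"
  by (subst kc_pow) auto

lemma kc_pow_k: "k \<ge> 1 \<Longrightarrow> kcycle k ^^ k = id"
proof (rule ext)
  fix x assume k: "k \<ge> 1"
  show "(kcycle k ^^ k) x = id x"
  proof (cases "1 \<le> x \<and> x \<le> k")
    case True
    have "(kcycle k ^^ k) x = (x - 1 + k) mod k + 1" using k True by (rule kc_pow_pt[of k x k, OF k] | simp add: kc_pow_pt)+
    also have "(x - 1 + k) mod k = (x - 1) mod k" by (rule mod_add_self2)
    also have "\<dots> = x - 1" by (rule mod_less) (use True in linarith)
    finally show ?thesis using True by simp
  next
    case False then show ?thesis using k by (simp add: kc_pow_out)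
  qed
qed

lemma kc_pow_km1: "k \<ge> 2 \<Longrightarrow> kcycle k ^^ (k - 1) = kinv k"
proof (rule ext)
  fix i assume k: "k \<ge> 2"
  show "(kcycle k ^^ (k - 1)) i = kinv k i"
  proof (cases "1 \<le> i \<and> i \<le> k")
    case True
    show ?thesis
    proof (cases "i = 1")
      case True then show ?thesis using k by (simp add: kc_pow_pt kinv_def)
    next
      case False
      have e: "i - 1 + (k - 1) = (i - 2) + k" using True False k by simp
      have "(i - 1 + (k - 1)) mod k = i - 2" unfolding e mod_add_self2 by (rule mod_less) (use True in linarith)
      moreover have "(kcycle k ^^ (k - 1)) i = (i - 1 + (k - 1)) mod k + 1" using True k by (intro kc_pow_pt) auto
      ultimately have "(kcycle k ^^ (k - 1)) i = i - 1" using True False by linarith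
      moreover have "kinv k i = i - 1" using True False by (auto simp: kinv_def)
      ultimately show ?thesis by simp
    qed
  next
    case False
    have "(kcycle k ^^ (k - 1)) i = i" by (rule kc_pow_out) (use k False in auto)
    moreover have "kinv k i = i" using False k by (auto simp: kinv_def)
    ultimately show ?thesis by simp
  qed
qed

lemma chi_kc: "k > 2 \<Longrightarrow> chi k \<omega> (kcycle k) = \<omega>"
proof -
  assume k: "k > 2"
  have "(LEAST j. kcycle k ^^ j = kcycle k) = 1"
  proof (rule Least_equality)
    show "kcycle k ^^ 1 = kcycle k" by simp
    fix j assume j: "kcycle k ^^ j = kcycle k"
    show "1 \<le> j"
    proof (rule ccontr)
      assume "\<not> 1 \<le> j" then have "j = 0" by simp
      then have "kcycle k = id" using j by simp
      then have "kcycle k 1 = 1" by simp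
      then show False using k by (simp add: kcycle_def)
    qed
  qed
  then show ?thesis by (simp add: chi_def)
qed

lemma chi_kinv: "k > 2 \<Longrightarrow> chi k \<omega> (kinv k) = \<omega> ^ (k - 1)"
proof -
  assume k: "k > 2"
  have "(LEAST j. kcycle k ^^ j = kinv k) = k - 1"
  proof (rule Least_equality)
    show "kcycle k ^^ (k - 1) = kinv k" by (rule kc_pow_km1) (use k in simp)
    fix j assume j: "kcycle k ^^ j = kinv k"
    have "(kcycle k ^^ j) 1 = kinv k 1" using j by (rule arg_cong)
    moreover have "(kcycle k ^^ j) 1 = (1 - 1 + j) mod k + 1" by (rule kc_pow_pt) (use k in auto)
    moreover have "kinv k 1 = k" by (simp add: kinv_def)
    ultimately have "j mod k + 1 = k" by simp
    then show "k - 1 \<le> j" using mod_less_eq_dividend[of j k] by linarith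
  qed
  then show ?thesis unfolding chi_def by (rule arg_cong)
qed



lemma bij_inv_l: "bij G \<Longrightarrow> inv G (G z) = z" by (simp add: bij_is_inj inv_f_f)
lemma bij_inv_r: "bij G \<Longrightarrow> G (inv G z) = z" by (simp add: bij_is_surj surj_f_inv_f)

lemma conj_pow: assumes "bij H" shows "(H \<circ> p \<circ> inv H) ^^ n = H \<circ> p ^^ n \<circ> inv H"
proof (induction n)
  case 0 then show ?case using bij_inv_r[OF assms] by (auto simp: fun_eq_iff)
next
  case (Suc n) then show ?case using bij_inv_l[OF assms] by (auto simp: fun_eq_iff)
qed

lemma comm_pow: assumes "x \<circ> p = p \<circ> x" shows "x \<circ> p ^^ n = p ^^ n \<circ> x"
proof (induction n)
  case 0 then show ?case by simp
next
  case (Suc n)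
  have "x \<circ> p ^^ Suc n = (x \<circ> p) \<circ> p ^^ n" by (simp add: o_assoc funpow_Suc_right[symmetric] funpow_swap1)
  also have "\<dots> = p \<circ> (x \<circ> p ^^ n)" using assms by (simp add: o_assoc)
  also have "\<dots> = p ^^ Suc n \<circ> x" by (metis Suc.IH comp_assoc funpow.simps(2))
  finally show ?case .
qed

lemma central:
  assumes k: "k \<ge> 2" and xp: "x permutes {1..k}" and c: "x \<circ> kcycle k = kcycle k \<circ> x"
  shows "x = kcycle k ^^ (x 1 - 1)"
proof (rule ext)
  fix i
  have x1: "x 1 \<in> {1..k}" using permutes_in_image[OF xp] k by simp
  show "x i = (kcycle k ^^ (x 1 - 1)) i"
  proof (cases "1 \<le> i \<and> i \<le> k")
    case True
    have im: "(i - 1) mod k = i - 1" by (rule mod_less) (use True in linarith)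
    have i: "(kcycle k ^^ (i - 1)) 1 = i"
      using kc_pow_pt[of k 1 "i - 1"] k True im by simp
    have "x i = x ((kcycle k ^^ (i - 1)) 1)" using i by simp
    also have "\<dots> = (kcycle k ^^ (i - 1)) (x 1)" using comm_pow[OF c, of "i - 1"] by (metis comp_apply)
    also have "\<dots> = (x 1 - 1 + (i - 1)) mod k + 1" using kc_pow_pt[of k "x 1" "i - 1"] k x1 by simp
    also have "\<dots> = (i - 1 + (x 1 - 1)) mod k + 1" by (simp add: add.commute)
    also have "\<dots> = (kcycle k ^^ (x 1 - 1)) i" using kc_pow_pt[of k i "x 1 - 1"] k True by simp
    finally show ?thesis .
  next
    case False
    have "x i = i" using permutes_not_in[OF xp] False by simp
    moreover have "(kcycle k ^^ (x 1 - 1)) i = i" by (rule kc_pow_out) (use k False in auto)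
    ultimately show ?thesis by simp
  qed
qed

lemma odd_exp:
  assumes ev: "even k" and k: "k > 2" and H: "bij H" and j: "kcycle k ^^ j = H \<circ> kcycle k \<circ> inv H"
  shows "odd j"
proof
  assume "even j"
  then obtain m where m: "j = 2 * m" by blast
  obtain h where h: "k = 2 * h" using ev by blast
  have "(H \<circ> kcycle k \<circ> inv H) ^^ h = H \<circ> kcycle k ^^ h \<circ> inv H" by (rule conj_pow[OF H])
  moreover have "(H \<circ> kcycle k \<circ> inv H) ^^ h = id"
  proof -
    have "(H \<circ> kcycle k \<circ> inv H) ^^ h = kcycle k ^^ (j * h)" by (simp add: j[symmetric] funpow_mult)
    also have "j * h = k * m" using m h by simp
    also have "kcycle k ^^ (k * m) = (kcycle k ^^ k) ^^ m" by (simp add: funpow_mult)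
    also have "\<dots> = id" using kc_pow_k[of k] k by simp
    finally show ?thesis .
  qed
  ultimately have e: "H \<circ> kcycle k ^^ h \<circ> inv H = id" by simp
  have "H ((kcycle k ^^ h) 1) = H 1"
    using fun_cong[OF e, of "H 1"] bij_inv_l[OF H] by simp
  then have "(kcycle k ^^ h) 1 = 1" using H by (metis bij_inv_l)
  moreover have "(kcycle k ^^ h) 1 = h mod k + 1" using kc_pow_pt[of k 1 h] k by simp
  moreover have "h mod k = h" using h k by simp
  ultimately show False using h k by simp
qed



lemma conjback: assumes "bij G" "G \<circ> a \<circ> inv G = b" shows "inv G \<circ> b \<circ> G = a"
proof (rule ext)
  fix z
  have "b (G z) = G (a (inv G (G z)))" using fun_cong[OF assms(2), of "G z"] by simp
  then show "(inv G \<circ> b \<circ> G) z = a z" using bij_inv_l[OF assms(1)] by simp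
qed

lemma conj_kinv:
  assumes k: "k \<ge> 2" and G: "bij G" and b: "inv G \<circ> b \<circ> G = kcycle k" and c: "c \<circ> b = id"
  shows "inv G \<circ> c \<circ> G = kinv k"
proof (rule ext)
  fix w
  let ?y = "inv G \<circ> c \<circ> G"
  have yk: "?y (kcycle k z) = z" for z
  proof -
    have "kcycle k z = inv G (b (G z))" using fun_cong[OF b, of z] by simp
    then have "?y (kcycle k z) = inv G (c (b (G z)))" using bij_inv_r[OF G] by simp
    also have "\<dots> = z" using fun_cong[OF c, of "G z"] bij_inv_l[OF G] by simp
    finally show ?thesis .
  qed
  have "?y w = ?y (kcycle k (kinv k w))" using kc_kinv_pt[OF k] by simp
  also have "\<dots> = kinv k w" by (rule yk)
  finally show "?y w = kinv k w" .
qed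

lemma chi_m1:
  fixes g :: "perm \<Rightarrow> perm"
  assumes ev: "even k" and k: "k > 2"
    and hyp: "\<forall>t\<in>conj_class (Sk k) (kcycle k). g t \<in> Sk k \<and> g t \<circ> kcycle k \<circ> inv (g t) = t"
    and t': "t' \<in> conj_class (Sk k) (kcycle k)" and u': "u' \<in> conj_class (Sk k) (kcycle k)"
    and cm: "t' \<circ> u' = u' \<circ> t'"
  shows "chi k (-1) (inv (g u') \<circ> t' \<circ> g u') = -1"
proof -
  let ?p = "kcycle k"
  define Gt where "Gt = g t'"
  define Gu where "Gu = g u'"
  have k2: "k \<ge> 2" using k by simp
  have pt: "Gt permutes {1..k}" and ht: "Gt \<circ> ?p \<circ> inv Gt = t'" using hyp t' by (auto simp: Gt_def Sk_def)
  have pu: "Gu permutes {1..k}" and hu: "Gu \<circ> ?p \<circ> inv Gu = u'" using hyp u' by (auto simp: Gu_def Sk_def)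
  have bt: "bij Gt" and bu: "bij Gu" using pt pu by (simp_all add: permutes_bij)
  have tdef: "t' z = Gt (?p (inv Gt z))" for z using fun_cong[OF ht, of z] by simp
  have udef: "u' z = Gu (?p (inv Gu z))" for z using fun_cong[OF hu, of z] by simp
  define H where "H = inv Gu \<circ> Gt"
  have bH: "bij H" unfolding H_def by (intro bij_comp bt bij_imp_bij_inv bu)
  have iH: "inv H = inv Gt \<circ> Gu"
    unfolding H_def using o_inv_distrib[OF bij_imp_bij_inv[OF bu] bt] inv_inv_eq[OF bu] by simp
  define x where "x = inv Gu \<circ> t' \<circ> Gu"
  have xH: "x = H \<circ> ?p \<circ> inv H" unfolding iH by (auto simp: x_def H_def fun_eq_iff tdef)
  have tp: "t' permutes {1..k}" unfolding ht[symmetric]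
    by (intro permutes_compose permutes_inv pt kc_permutes k2)
  have xp: "x permutes {1..k}" unfolding x_def
    by (intro permutes_compose permutes_inv pu tp)
  have pz: "?p z = inv Gu (u' (Gu z))" for z using udef bij_inv_l[OF bu] by simp
  have xc: "x \<circ> ?p = ?p \<circ> x"
  proof (rule ext)
    fix z
    have "(x \<circ> ?p) z = inv Gu (t' (u' (Gu z)))"
      unfolding x_def using pz[of z] bij_inv_r[OF bu] by simp
    also have "\<dots> = inv Gu (u' (t' (Gu z)))" using fun_cong[OF cm, of "Gu z"] by simp
    also have "\<dots> = (?p \<circ> x) z"
      unfolding x_def using pz[of "inv Gu (t' (Gu z))"] bij_inv_r[OF bu] by simp
    finally show "(x \<circ> ?p) z = (?p \<circ> x) z" .
  qed
  have xc2: "x = ?p ^^ (x 1 - 1)" by (rule central[OF k2 xp xc])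
  have ex: "\<exists>j. ?p ^^ j = x" by (rule exI[of _ "x 1 - 1"]) (rule xc2[symmetric])
  define j0 where "j0 = (LEAST j. ?p ^^ j = x)"
  have "?p ^^ j0 = x" unfolding j0_def using ex by (rule LeastI_ex)
  then have "?p ^^ j0 = H \<circ> ?p \<circ> inv H" by (rule trans[OF _ xH])
  then have "odd j0" by (rule odd_exp[OF ev k bH])
  then show ?thesis unfolding chi_def Gu_def[symmetric] x_def[symmetric] j0_def[symmetric] by simp
qed



theorem proposition2p2:
  fixes k :: nat and \<omega> :: complex and g :: "perm \<Rightarrow> perm"
  assumes "even k" and "k > 2" and "\<omega> ^ k = 1"
    and "\<forall>t\<in>conj_class (Sk k) (kcycle k).
           g t \<in> Sk k \<and> g t \<circ> kcycle k \<circ> inv (g t) = t"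
  shows "(\<omega> \<noteq> -1 \<longrightarrow>
           nichols_dim (conj_class (Sk k) (kcycle k)) rack_conj (yd_coeff g (chi k \<omega>)) = \<infinity>)
       \<and> (\<omega> = -1 \<longrightarrow> negative_braiding (conj_class (Sk k) (kcycle k)) g (chi k \<omega>))"
proof (intro conjI impI)
  note ev = assms(1) and k = assms(2) and wk = assms(3) and hyp = assms(4)
  let ?C = "conj_class (Sk k) (kcycle k)"
  let ?p = "kcycle k"
  let ?u = "kinv k"
  let ?q = "yd_coeff g (chi k \<omega>)"
  have k2: "k \<ge> 2" using k by simp
  {
    assume wn: "\<omega> \<noteq> -1"
    have pC: "?p \<in> ?C" using kc_in_C[OF k2] .
    have uC: "?u \<in> ?C" using kinv_in_C[OF k2] .
    define Gt where "Gt = g ?p"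
    define Gu where "Gu = g ?u"
    have ht: "Gt \<circ> ?p \<circ> inv Gt = ?p" and pt: "Gt permutes {1..k}"
      using hyp pC by (auto simp: Gt_def Sk_def)
    have hu: "Gu \<circ> ?p \<circ> inv Gu = ?u" and pu: "Gu permutes {1..k}"
      using hyp uC by (auto simp: Gu_def Sk_def)
    have bt: "bij Gt" and bu: "bij Gu" using pt pu by (simp_all add: permutes_bij)
    have c1: "?p \<circ> ?p \<circ> inv ?p = ?p" "?p \<circ> ?u \<circ> inv ?p = ?u"
         "?u \<circ> ?p \<circ> inv ?u = ?p" "?u \<circ> ?u \<circ> inv ?u = ?u"
      using k2 by (simp_all add: fun_eq_iff inv_kc inv_kinv kc_kinv_pt kinv_kc_pt)
    have comm: "\<forall>a\<in>{?p, ?u}. \<forall>b\<in>{?p, ?u}. rack_conj a b = b"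
      using c1 by (auto simp: rack_conj_def)
    have bt1: "inv Gt \<circ> ?p \<circ> Gt = ?p" by (rule conjback[OF bt ht])
    have bu1: "inv Gu \<circ> ?u \<circ> Gu = ?p" by (rule conjback[OF bu hu])
    have qpp: "?q ?p ?p = \<omega>"
      unfolding yd_coeff_def c1 Gt_def[symmetric] bt1 using chi_kc[OF k] .
    have quu: "?q ?u ?u = \<omega>"
      unfolding yd_coeff_def c1 Gu_def[symmetric] bu1 using chi_kc[OF k] .
    have qpu: "?q ?p ?u = \<omega> ^ (k - 1)"
    proof -
      have "inv Gu \<circ> ?p \<circ> Gu = ?u" by (rule conj_kinv[OF k2 bu bu1]) (use kc_kinv[OF k2] in simp)
      then show ?thesis unfolding yd_coeff_def c1 Gu_def[symmetric] using chi_kinv[OF k] by simp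
    qed
    have qup: "?q ?u ?p = \<omega> ^ (k - 1)"
    proof -
      have "inv Gt \<circ> ?u \<circ> Gt = ?u" by (rule conj_kinv[OF k2 bt bt1]) (use kinv_kc[OF k2] in simp)
      then show ?thesis unfolding yd_coeff_def c1 Gt_def[symmetric] using chi_kinv[OF k] by simp
    qed
    have wk1: "\<omega> ^ (k - 1) * \<omega> = 1 * \<omega> ^ k" using k by (simp add: power_Suc2[symmetric])
    show "nichols_dim ?C rack_conj ?q = \<infinity>"
    proof (cases "\<omega> = 1")
      case True
      show ?thesis
      proof (rule inf_single[OF finite_C pC])
        show "rack_conj ?p ?p = ?p" using c1 by (simp add: rack_conj_def)
        show "?q ?p ?p = 1" using qpp True by simp
      qed
    next
      case False
      have pu_ne: "?p \<noteq> ?u"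
      proof
        assume "?p = ?u"
        then have "?p 1 = ?u 1" by simp
        then show False using k by (simp add: kcycle_def kinv_def)
      qed
      show ?thesis
      proof (rule inf_pair[OF finite_C pC uC pu_ne comm])
        show "?q ?u ?p * ?q ?u ?u * (?q ?p ?p * ?q ?p ?u) = 1"
          unfolding qpp quu qpu qup using wk1 wk by (simp add: algebra_simps)
        show "?q ?p ?u * ?q ?u ?p \<noteq> 1"
        proof
          assume h: "?q ?p ?u * ?q ?u ?p = 1"
          have "\<omega>\<^sup>2 = (\<omega> ^ (k - 1) * \<omega>) * (\<omega> ^ (k - 1) * \<omega>)"
            using h unfolding qpu qup by (simp add: algebra_simps power2_eq_square)
          also have "\<dots> = 1" using wk1 wk by simp
          finally have "\<omega>\<^sup>2 = 1" .
          then show False using False wn by (simp add: power2_eq_1_iff)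
        qed
      qed
    qed
  }
  {
    assume wm: "\<omega> = -1"
    show "negative_braiding ?C g (chi k \<omega>)"
      unfolding negative_braiding_def wm
    proof (intro ballI impI conjI)
      fix t u assume t: "t \<in> ?C" and u: "u \<in> ?C" and cm: "t \<circ> u = u \<circ> t"
      show "chi k (- 1) (inv (g t) \<circ> t \<circ> g t) = - 1"
        by (rule chi_m1[OF ev k hyp t t]) simp
      show "chi k (- 1) (inv (g u) \<circ> t \<circ> g u) * chi k (- 1) (inv (g t) \<circ> u \<circ> g t) = 1"
        using chi_m1[OF ev k hyp t u cm] chi_m1[OF ev k hyp u t cm[symmetric]] by simp
    qed
  }
qed

end
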